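(* The Borda SCC and the Copeland SCC are both immune to the reversal bias of type 3; that is, for $C\in\{Bor,Cop\}$ and every $p\in\mathcal P$, if $C(p)\cap C(p^r)\neq\varnothing$ then $C(p)=N$.
   Context: Let $n,h\ge2$, $N=\{1,\dots,n\}$, $H=\{1,\dots,h\}$. A preference profile is an $h$-tuple $p$ of linear orders on $N$; $\mathcal P$ is the set of profiles; $p^r$ is obtained by reversing each order; $\mathrm{rank}_{p_i}(x)=|\{y: y>_{p_i}x\}|+1$. Let $\mu_0=\lceil (h+1)/2\rceil$, and write $x>^p_{\mu_0}y$ if $|\{i\in H: x>_{p_i}y\}|\ge\mu_0$. The Borda SCC is $Bor(p)=\mathrm{argmax}_{x\in N}\sum_{i=1}^h(n-\mathrm{rank}_{p_i}(x))$; the Copeland SCC is $Cop(p)=\mathrm{argmax}_{x\in N}\big(|\{y: x>^p_{\mu_0}y\}|-|\{y: y>^p_{\mu_0}x\}|\big)$. An SCC $C$ suffers the reversal bias of type 3 if there exists $p$ with $|C(p)|<n$ and $C(p)\cap C(p^r)\ne\varnothing$. *)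

theory Defs
  imports Complex_Main
begin

text \<open>Alternatives N = {1..n}, voters H = {1..h}. A linear order on N is a relation
  r with linear_order_on {1..n} r; (x,y) \<in> r means x is ranked weakly above y.
  A profile is a function p from voters to linear orders (only voters in {1..h} matter).\<close>

definition is_profile :: "nat \<Rightarrow> nat \<Rightarrow> (nat \<Rightarrow> (nat \<times> nat) set) \<Rightarrow> bool" where
  "is_profile n h p \<longleftrightarrow> (\<forall>i\<in>{1..h}. linear_order_on {1..n} (p i))"

definition prefers :: "(nat \<times> nat) set \<Rightarrow> nat \<Rightarrow> nat \<Rightarrow> bool" where
  "prefers r x y \<longleftrightarrow> (x, y) \<in> r \<and> x \<noteq> y"

definition reversal :: "(nat \<Rightarrow> (nat \<times> nat) set) \<Rightarrow> (nat \<Rightarrow> (nat \<times> nat) set)" where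
  "reversal p = (\<lambda>i. converse (p i))"

definition rank :: "nat \<Rightarrow> (nat \<times> nat) set \<Rightarrow> nat \<Rightarrow> nat" where
  "rank n r x = card {y \<in> {1..n}. prefers r y x} + 1"

definition borda_score :: "nat \<Rightarrow> nat \<Rightarrow> (nat \<Rightarrow> (nat \<times> nat) set) \<Rightarrow> nat \<Rightarrow> int" where
  "borda_score n h p x = (\<Sum>i\<in>{1..h}. int n - int (rank n (p i) x))"

definition Bor :: "nat \<Rightarrow> nat \<Rightarrow> (nat \<Rightarrow> (nat \<times> nat) set) \<Rightarrow> nat set" where
  "Bor n h p = {x \<in> {1..n}. \<forall>y\<in>{1..n}. borda_score n h p y \<le> borda_score n h p x}"

definition mu0 :: "nat \<Rightarrow> nat" where
  "mu0 h = nat \<lceil>(real h + 1) / 2\<rceil>"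

definition maj :: "nat \<Rightarrow> (nat \<Rightarrow> (nat \<times> nat) set) \<Rightarrow> nat \<Rightarrow> nat \<Rightarrow> bool" where
  "maj h p x y \<longleftrightarrow> card {i \<in> {1..h}. prefers (p i) x y} \<ge> mu0 h"

definition copeland_score :: "nat \<Rightarrow> nat \<Rightarrow> (nat \<Rightarrow> (nat \<times> nat) set) \<Rightarrow> nat \<Rightarrow> int" where
  "copeland_score n h p x =
     int (card {y \<in> {1..n}. maj h p x y}) - int (card {y \<in> {1..n}. maj h p y x})"

definition Cop :: "nat \<Rightarrow> nat \<Rightarrow> (nat \<Rightarrow> (nat \<times> nat) set) \<Rightarrow> nat set" where
  "Cop n h p = {x \<in> {1..n}. \<forall>y\<in>{1..n}. copeland_score n h p y \<le> copeland_score n h p x}"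

end

theory Submission
  imports Defs
begin

lemma rank_rev:
  assumes lo: "linear_order_on {1..n} r" and x: "x \<in> {1..n}"
  shows "int (rank n (converse r) x) = int n + 1 - int (rank n r x)"
proof -
  let ?A = "{y \<in> {1..n}. prefers r y x}"
  let ?B = "{y \<in> {1..n}. prefers r x y}"
  have tot: "total_on {1..n} r" and anti: "antisym r"
    using lo by (auto simp: linear_order_on_def partial_order_on_def)
  have "?A \<union> ?B = {1..n} - {x}"
    proof
    show "?A \<union> ?B \<subseteq> {1..n} - {x}" unfolding prefers_def by auto
    show "{1..n} - {x} \<subseteq> ?A \<union> ?B"
    proof
      fix y assume y: "y \<in> {1..n} - {x}"
      then have "(x, y) \<in> r \<or> (y, x) \<in> r" using tot x unfolding total_on_def by blast
      then show "y \<in> ?A \<union> ?B" using y unfolding prefers_def by auto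
    qed
  qed
  moreover have "?A \<inter> ?B = {}"
    using anti unfolding antisym_def prefers_def by auto
  ultimately have "card ?A + card ?B = n - 1"
    using x by (metis (no_types, lifting) card_Diff_singleton card_Un_disjoint
        card_atLeastAtMost diff_Suc_1 finite_Diff finite_Un finite_atLeastAtMost)
  moreover have "{y \<in> {1..n}. prefers (converse r) y x} = ?B"
    unfolding prefers_def by auto
  moreover have "n \<ge> 1" using x by auto
  ultimately show ?thesis unfolding rank_def by simp
qed

lemma argmax_gen:
  fixes s t :: "nat \<Rightarrow> int"
  assumes "\<forall>x\<in>N. t x = c - s x"
    and "x \<in> {x\<in>N. \<forall>y\<in>N. s y \<le> s x}" and "x \<in> {x\<in>N. \<forall>y\<in>N. t y \<le> t x}"
  shows "{x\<in>N. \<forall>y\<in>N. s y \<le> s x} = N"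
  using assms by fastforce

theorem proposition2:
  fixes n h :: nat
  assumes "n \<ge> 2" and "h \<ge> 2"
  shows "\<forall>C \<in> {Bor n h, Cop n h}. \<forall>p. is_profile n h p \<longrightarrow>
           C p \<inter> C (reversal p) \<noteq> {} \<longrightarrow> C p = {1..n}"
proof (intro ballI allI impI)
  fix C p assume C: "C \<in> {Bor n h, Cop n h}" and pr: "is_profile n h p"
    and ne: "C p \<inter> C (reversal p) \<noteq> {}"
  then obtain x where x1: "x \<in> C p" and x2: "x \<in> C (reversal p)" by blast
  show "C p = {1..n}"
  proof (cases "C = Bor n h")
    case True
    have "\<forall>y\<in>{1..n}. borda_score n h (reversal p) y = int h * (int n - 1) - borda_score n h p y"
    proof
      fix y assume y: "y \<in> {1..n}"
      have "borda_score n h (reversal p) y = (\<Sum>i\<in>{1..h}. (int n - 1) - (int n - int (rank n (p i) y)))"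
        unfolding borda_score_def reversal_def
        using rank_rev[OF _ y] pr unfolding is_profile_def by (intro sum.cong) auto
      also have "\<dots> = int h * (int n - 1) - borda_score n h p y"
        unfolding borda_score_def by (simp add: sum_subtractf algebra_simps)
      finally show "borda_score n h (reversal p) y = int h * (int n - 1) - borda_score n h p y" .
    qed
    moreover have "x \<in> Bor n h p" "x \<in> Bor n h (reversal p)" using True x1 x2 by auto
    ultimately show ?thesis unfolding True Bor_def
      by (rule argmax_gen[where t="borda_score n h (reversal p)"])
  next
    case False
    hence Cc: "C = Cop n h" using C by auto
    have mj: "maj h (reversal p) a b = maj h p b a" for a b
    proof -
      have "{i \<in> {1..h}. prefers (reversal p i) a b} = {i \<in> {1..h}. prefers (p i) b a}"
        unfolding reversal_def prefers_def by blast
      then show ?thesis unfolding maj_def by simp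
    qed
    have "\<forall>y\<in>{1..n}. copeland_score n h (reversal p) y = 0 - copeland_score n h p y"
      unfolding copeland_score_def mj by simp
    moreover have "x \<in> Cop n h p" "x \<in> Cop n h (reversal p)" using Cc x1 x2 by auto
    ultimately show ?thesis unfolding Cc Cop_def
      by (rule argmax_gen[where t="copeland_score n h (reversal p)"])
  qed
qed

end
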